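(* A coarse space $(X,\mathcal E)$ has $\operatorname{asdim}(X)\le n$ for some $n\in\omega$ if and only if for every entourage $\varepsilon\in\mathcal E$ there is an entourage $\delta\in\mathcal E$ such that for every finite set $F\subset X$ there is a coloring $\chi:F\to\{0,\dots,n\}$ such that every $\chi$-monochrome $\varepsilon$-chain $C\subset F$ satisfies $C\times C\subset\delta$.
   Context: A coarse space is a pair $(X,\mathcal E)$ of a set and a family of entourages $\varepsilon\subset X\times X$ that contain the diagonal, are symmetric, are (up to containment) closed under composition, and such that any symmetric $\delta$ with $\Delta_X\subset\delta\subset\varepsilon\in\mathcal E$ is in $\mathcal E$. $B(x,\varepsilon)=\{y:(x,y)\in\varepsilon\}$; $\operatorname{mesh}(\mathcal U)=\bigcup_{U\in\mathcal U}U\times U$. $\operatorname{asdim}(X)$ is the least $n\in\omega$ such that for every $\varepsilon\in\mathcal E$ there is a cover $\mathcal U$ of $X$ with $\operatorname{mesh}(\mathcal U)\subset\delta$ for some $\delta\in\mathcal E$ and each $B(x,\varepsilon)$ meeting at most $n+1$ members of $\mathcal U$ ($\infty$ if none). An $\varepsilon$-chain is a finite set $\{x_0,\dots,x_m\}$ with $(x_i,x_{i+1})\in\varepsilon$ for all $i<m$; it is $\chi$-monochrome if $\chi$ is constant on it. *)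

theory Defs
  imports Main "HOL-Library.Extended_Nat"
begin

definition coarse_space :: "'a set \<Rightarrow> ('a \<times> 'a) set set \<Rightarrow> bool" where
  "coarse_space X E \<longleftrightarrow>
     (\<forall>\<epsilon>\<in>E. Id_on X \<subseteq> \<epsilon> \<and> \<epsilon> \<subseteq> X \<times> X \<and> sym \<epsilon>) \<and>
     (\<forall>\<epsilon>\<in>E. \<forall>\<delta>\<in>E. \<exists>\<eta>\<in>E. \<epsilon> O \<delta> \<subseteq> \<eta>) \<and>
     (\<forall>\<epsilon>\<in>E. \<forall>\<delta>. sym \<delta> \<and> Id_on X \<subseteq> \<delta> \<and> \<delta> \<subseteq> \<epsilon> \<longrightarrow> \<delta> \<in> E)"

definition ball :: "'a \<Rightarrow> ('a \<times> 'a) set \<Rightarrow> 'a set" where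
  "ball x \<epsilon> = {y. (x, y) \<in> \<epsilon>}"

definition mesh :: "'a set set \<Rightarrow> ('a \<times> 'a) set" where
  "mesh \<U> = (\<Union>U\<in>\<U>. U \<times> U)"

definition asdim_prop :: "'a set \<Rightarrow> ('a \<times> 'a) set set \<Rightarrow> nat \<Rightarrow> bool" where
  "asdim_prop X E n \<longleftrightarrow>
     (\<forall>\<epsilon>\<in>E. \<exists>\<U>. \<Union>\<U> = X \<and> (\<exists>\<delta>\<in>E. mesh \<U> \<subseteq> \<delta>) \<and>
        (\<forall>x\<in>X. finite {U\<in>\<U>. ball x \<epsilon> \<inter> U \<noteq> {}} \<and>
                card {U\<in>\<U>. ball x \<epsilon> \<inter> U \<noteq> {}} \<le> n + 1))"

definition asdim :: "'a set \<Rightarrow> ('a \<times> 'a) set set \<Rightarrow> enat" where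
  "asdim X E = (if \<exists>n. asdim_prop X E n then enat (LEAST n. asdim_prop X E n) else \<infinity>)"

definition eps_chain :: "('a \<times> 'a) set \<Rightarrow> 'a set \<Rightarrow> bool" where
  "eps_chain \<epsilon> C \<longleftrightarrow>
     (\<exists>m::nat. \<exists>x::nat \<Rightarrow> 'a. C = x ` {0..m} \<and> (\<forall>i<m. (x i, x (Suc i)) \<in> \<epsilon>))"

definition monochrome :: "('a \<Rightarrow> nat) \<Rightarrow> 'a set \<Rightarrow> bool" where
  "monochrome \<chi> C \<longleftrightarrow> (\<forall>x\<in>C. \<forall>y\<in>C. \<chi> x = \<chi> y)"

end

theory Submission
  imports Defs
begin

lemma asdim_prop_mono:
  assumes "asdim_prop X E k" "k \<le> n" shows "asdim_prop X E n"
proof -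
  have "k + 1 \<le> n + 1" using assms(2) by simp
  then show ?thesis using assms(1) unfolding asdim_prop_def
    by (meson order_trans)
qed

lemma asdim_le_iff: "asdim X E \<le> enat n \<longleftrightarrow> asdim_prop X E n"
proof
  assume a: "asdim X E \<le> enat n"
  show "asdim_prop X E n"
  proof (cases "\<exists>k. asdim_prop X E k")
    case True
    then have "asdim X E = enat (LEAST k. asdim_prop X E k)" by (simp add: asdim_def)
    with a have le: "(LEAST k. asdim_prop X E k) \<le> n" by simp
    from True have "asdim_prop X E (LEAST k. asdim_prop X E k)" by (metis LeastI)
    then show ?thesis using le by (rule asdim_prop_mono)
  next
    case False
    then have "asdim X E = \<infinity>" by (simp add: asdim_def)
    with a show ?thesis by simp
  qed
next
  assume a: "asdim_prop X E n"
  then have "asdim X E = enat (LEAST k. asdim_prop X E k)" by (auto simp add: asdim_def)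
  moreover have "(LEAST k. asdim_prop X E k) \<le> n" using a by (rule Least_le)
  ultimately show "asdim X E \<le> enat n" by simp
qed

lemma forward:
  assumes cs: "coarse_space X E" and ad: "asdim_prop X E n" and epsE: "\<epsilon> \<in> E"
  shows "\<exists>\<delta>\<in>E. \<exists>\<chi>::'a\<Rightarrow>nat. (\<forall>x\<in>X. \<chi> x \<le> n) \<and>
           (\<forall>C. C \<subseteq> X \<and> eps_chain \<epsilon> C \<and> monochrome \<chi> C \<longrightarrow> C \<times> C \<subseteq> \<delta>)"
proof -
  have ent: "\<And>e. e \<in> E \<Longrightarrow> Id_on X \<subseteq> e \<and> e \<subseteq> X \<times> X \<and> sym e"
    using conjunct1[OF cs[unfolded coarse_space_def]] by (rule bspec)
  have comp: "\<And>e d. e \<in> E \<Longrightarrow> d \<in> E \<Longrightarrow> \<exists>\<eta>\<in>E. e O d \<subseteq> \<eta>"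
    using conjunct1[OF conjunct2[OF cs[unfolded coarse_space_def]]] by blast
  define e where "e = rec_nat \<epsilon> (\<lambda>_ r. SOME \<eta>. \<eta> \<in> E \<and> r O \<epsilon> \<subseteq> \<eta>)"
  have e0: "e 0 = \<epsilon>" and eS: "\<And>i. e (Suc i) = (SOME \<eta>. \<eta> \<in> E \<and> e i O \<epsilon> \<subseteq> \<eta>)"
    by (simp_all add: e_def)
  have step: "\<And>r. r \<in> E \<Longrightarrow> (SOME \<eta>. \<eta> \<in> E \<and> r O \<epsilon> \<subseteq> \<eta>) \<in> E \<and> r O \<epsilon> \<subseteq> (SOME \<eta>. \<eta> \<in> E \<and> r O \<epsilon> \<subseteq> \<eta>)"
  proof -
    fix r assume "r \<in> E"
    then have "\<exists>\<eta>. \<eta> \<in> E \<and> r O \<epsilon> \<subseteq> \<eta>" using comp epsE by blast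
    then show "(SOME \<eta>. \<eta> \<in> E \<and> r O \<epsilon> \<subseteq> \<eta>) \<in> E \<and> r O \<epsilon> \<subseteq> (SOME \<eta>. \<eta> \<in> E \<and> r O \<epsilon> \<subseteq> \<eta>)"
      by (rule someI_ex)
  qed
  have eE: "e i \<in> E" for i by (induction i) (simp_all add: e0 eS epsE step)
  have eO: "e i O \<epsilon> \<subseteq> e (Suc i)" for i using step[OF eE[of i]] eS by simp
  have esym: "sym (e i)" for i using ent[OF eE[of i]] by blast
  have esub: "e i \<subseteq> X \<times> X" for i using ent[OF eE[of i]] by blast
  have eId: "Id_on X \<subseteq> e i" for i using ent[OF eE[of i]] by blast
  have epsent: "Id_on X \<subseteq> \<epsilon> \<and> \<epsilon> \<subseteq> X \<times> X \<and> sym \<epsilon>" using ent[OF epsE] .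
  have emono1: "e i \<subseteq> e (Suc i)" for i
  proof
    fix p assume p: "p \<in> e i"
    obtain a b where ab: "p = (a,b)" by (cases p)
    have "b \<in> X" using p ab esub by blast
    then have "(b,b) \<in> \<epsilon>" using epsent by (auto simp: Id_on_def)
    then have "(a,b) \<in> e i O \<epsilon>" using p ab by blast
    then show "p \<in> e (Suc i)" using eO ab by blast
  qed
  have emono: "i \<le> j \<Longrightarrow> e i \<subseteq> e j" for i j
    by (rule lift_Suc_mono_le[of e]) (use emono1 in auto)
  obtain UU \<delta>0 where UX: "\<Union>UU = X" and d0E: "\<delta>0 \<in> E" and mUU: "mesh UU \<subseteq> \<delta>0"
    and Ufin: "\<forall>x\<in>X. finite {U\<in>UU. ball x (e (Suc n)) \<inter> U \<noteq> {}} \<and>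
                card {U\<in>UU. ball x (e (Suc n)) \<inter> U \<noteq> {}} \<le> n + 1"
    using bspec[OF ad[unfolded asdim_prop_def] eE[of "Suc n"]] by blast
  define S where "S i x = {U\<in>UU. ball x (e i) \<inter> U \<noteq> {}}" for i x
  have Smono: "i \<le> j \<Longrightarrow> S i x \<subseteq> S j x" for i j x
    using emono[of i j] unfolding S_def ball_def by blast
  have Sfin: "x \<in> X \<Longrightarrow> i \<le> Suc n \<Longrightarrow> finite (S i x)" for i x
    using Ufin Smono[of i "Suc n" x] unfolding S_def by (meson finite_subset)
  have Scard: "x \<in> X \<Longrightarrow> i \<le> Suc n \<Longrightarrow> card (S i x) \<le> n + 1" for i x
  proof -
    assume x: "x \<in> X" and i: "i \<le> Suc n"
    have "card (S i x) \<le> card (S (Suc n) x)"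
      using Sfin[OF x, of "Suc n"] Smono[OF i, of x] by (simp add: card_mono)
    also have "\<dots> \<le> n + 1" using Ufin x unfolding S_def by blast
    finally show ?thesis .
  qed
  have Sne: "x \<in> X \<Longrightarrow> \<exists>U. U \<in> S i x \<and> x \<in> U" for i x
  proof -
    assume x: "x \<in> X"
    then obtain U where U: "U \<in> UU" "x \<in> U" using UX by blast
    have "(x,x) \<in> e i" using eId x by (auto simp: Id_on_def)
    then have "x \<in> ball x (e i)" by (simp add: ball_def)
    then show ?thesis using U unfolding S_def by blast
  qed
  have Spos: "x \<in> X \<Longrightarrow> i \<le> Suc n \<Longrightarrow> 1 \<le> card (S i x)" for i x
  proof -
    assume x: "x \<in> X" and i: "i \<le> Suc n"
    obtain U where "U \<in> S i x" using Sne[OF x] by blast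
    then have "S i x \<noteq> {}" by blast
    then show ?thesis using Sfin[OF x i] by (simp add: Suc_le_eq card_gt_0_iff)
  qed
  have pig: "x \<in> X \<Longrightarrow> \<exists>i\<le>n. card (S i x) = card (S (Suc i) x)" for x
  proof (rule ccontr)
    assume x: "x \<in> X" and no: "\<not> (\<exists>i\<le>n. card (S i x) = card (S (Suc i) x))"
    have lt: "i \<le> n \<Longrightarrow> card (S i x) < card (S (Suc i) x)" for i
    proof -
      assume i: "i \<le> n"
      have "card (S i x) \<le> card (S (Suc i) x)"
        using Sfin[OF x, of "Suc i"] Smono[of i "Suc i" x] i by (simp add: card_mono)
      then show ?thesis using no i by (simp add: order_less_le)
    qed
    have "i \<le> Suc n \<Longrightarrow> i + 1 \<le> card (S i x)" for i
    proof (induction i)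
      case 0 then show ?case using Spos[OF x] by simp
    next
      case (Suc i) then show ?case using lt[of i] by simp
    qed
    then have "Suc n + 1 \<le> card (S (Suc n) x)" by simp
    with Scard[OF x, of "Suc n"] show False by simp
  qed
  define I where "I x = (LEAST i. card (S i x) = card (S (Suc i) x))" for x
  have I: "x \<in> X \<Longrightarrow> I x \<le> n \<and> S (I x) x = S (Suc (I x)) x" for x
  proof -
    assume x: "x \<in> X"
    from pig[OF x] obtain i where i: "i \<le> n" "card (S i x) = card (S (Suc i) x)" by blast
    have c: "card (S (I x) x) = card (S (Suc (I x)) x)" unfolding I_def
      by (rule LeastI[of _ i]) (rule i(2))
    have le: "I x \<le> n" using Least_le[of "\<lambda>i. card (S i x) = card (S (Suc i) x)" i] i
      unfolding I_def by linarith
    have "S (I x) x = S (Suc (I x)) x"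
      using card_subset_eq[OF Sfin[OF x, of "Suc (I x)"] Smono[of "I x" "Suc (I x)" x] c] le by simp
    with le show ?thesis by simp
  qed
  define L where "L x = S (I x) x" for x
  define \<chi> where "\<chi> x = card (L x) - 1" for x
  have Lfin: "x \<in> X \<Longrightarrow> finite (L x)" for x using Sfin I unfolding L_def by simp
  have Lcard: "x \<in> X \<Longrightarrow> 1 \<le> card (L x) \<and> card (L x) \<le> n + 1" for x
    using Spos Scard I unfolding L_def by simp
  have trans: "x \<in> X \<Longrightarrow> (x,y) \<in> \<epsilon> \<Longrightarrow> S i x \<subseteq> S (Suc i) y" for x y i
  proof
    fix U assume x: "x \<in> X" and xy: "(x,y) \<in> \<epsilon>" and U: "U \<in> S i x"
    then obtain z where z: "z \<in> U" "(x,z) \<in> e i" "U \<in> UU" unfolding S_def ball_def by blast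
    have "(z,x) \<in> e i" using z esym[of i] by (meson symD)
    then have "(z,y) \<in> e (Suc i)" using xy eO[of i] by blast
    then have "(y,z) \<in> e (Suc i)" using esym by (meson symD)
    then show "U \<in> S (Suc i) y" using z unfolding S_def ball_def by blast
  qed
  have one: "x \<in> X \<Longrightarrow> y \<in> X \<Longrightarrow> (x,y) \<in> \<epsilon> \<Longrightarrow> \<chi> x = \<chi> y \<Longrightarrow> I x \<le> I y \<Longrightarrow> L x = L y" for x y
  proof -
    assume x: "x \<in> X" and y: "y \<in> X" and xy: "(x,y) \<in> \<epsilon>" and c: "\<chi> x = \<chi> y" and le: "I x \<le> I y"
    have s1: "L x \<subseteq> S (Suc (I x)) y" unfolding L_def using trans[OF x xy] .
    have s2: "S (Suc (I x)) y \<subseteq> L y"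
    proof (cases "Suc (I x) \<le> I y")
      case True then show ?thesis unfolding L_def using Smono by blast
    next
      case False then have "I y = I x" using le by simp
      then show ?thesis unfolding L_def using I[OF y] by simp
    qed
    have "card (L x) = card (L y)" using c Lcard[OF x] Lcard[OF y] unfolding \<chi>_def by linarith
    then show ?thesis using card_subset_eq[OF Lfin[OF y]] s1 s2 by blast
  qed
  have key: "x \<in> X \<Longrightarrow> y \<in> X \<Longrightarrow> (x,y) \<in> \<epsilon> \<Longrightarrow> \<chi> x = \<chi> y \<Longrightarrow> L x = L y" for x y
  proof -
    assume x: "x \<in> X" and y: "y \<in> X" and xy: "(x,y) \<in> \<epsilon>" and c: "\<chi> x = \<chi> y"
    have yx: "(y,x) \<in> \<epsilon>" using xy epsent by (meson symD)
    show ?thesis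
    proof (cases "I x \<le> I y")
      case True then show ?thesis using one[OF x y xy c] by simp
    next
      case False then show ?thesis using one[OF y x yx c[symmetric]] by simp
    qed
  qed
  obtain \<eta>1 where h1: "\<eta>1 \<in> E" "e (Suc n) O \<delta>0 \<subseteq> \<eta>1" using comp[OF eE d0E] by blast
  obtain \<eta> where h: "\<eta> \<in> E" "\<eta>1 O e (Suc n) \<subseteq> \<eta>" using comp[OF h1(1) eE] by blast
  have chains: "C \<times> C \<subseteq> \<eta>" if C: "C \<subseteq> X" "eps_chain \<epsilon> C" "monochrome \<chi> C" for C
  proof -
    obtain m f where Cf: "C = f ` {0..m}" and st: "\<forall>i<m. (f i, f (Suc i)) \<in> \<epsilon>"
      using C(2) unfolding eps_chain_def by blast
    have fX: "k \<le> m \<Longrightarrow> f k \<in> X" for k using C(1) Cf by auto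
    have Lc: "k \<le> m \<Longrightarrow> L (f k) = L (f 0)" for k
    proof (induction k)
      case 0 then show ?case by simp
    next
      case (Suc k)
      have inC: "f k \<in> C" "f (Suc k) \<in> C" using Cf Suc.prems by auto
      have "\<chi> (f k) = \<chi> (f (Suc k))" using C(3) inC unfolding monochrome_def by blast
      have km: "Suc k \<le> m" using Suc.prems .
      have "(f k, f (Suc k)) \<in> \<epsilon>" using st km by simp
      then have "L (f k) = L (f (Suc k))"
        using key[OF fX[of k] fX[of "Suc k"] _ \<open>\<chi> (f k) = \<chi> (f (Suc k))\<close>] km by simp
      then show ?case using Suc by simp
    qed
    obtain U0 where U0: "U0 \<in> L (f 0)" using Sne[OF fX[of 0]] unfolding L_def by auto
    have U0UU: "U0 \<in> UU" using U0 unfolding L_def S_def by blast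
    have near: "a \<in> C \<Longrightarrow> \<exists>z\<in>U0. (a,z) \<in> e (Suc n)" for a
    proof -
      assume "a \<in> C"
      then obtain k where k: "k \<le> m" "a = f k" using Cf by auto
      have aX: "a \<in> X" using fX k by simp
      have "U0 \<in> L a" using U0 Lc[OF k(1)] k(2) by simp
      then have "U0 \<in> S (I a) a" unfolding L_def .
      moreover have "I a \<le> Suc n" using I[OF aX] by simp
      then have "S (I a) a \<subseteq> S (Suc n) a" by (rule Smono)
      ultimately show ?thesis unfolding S_def ball_def by blast
    qed
    show ?thesis
    proof
      fix p assume "p \<in> C \<times> C"
      then obtain a b where ab: "p = (a,b)" "a \<in> C" "b \<in> C" by blast
      obtain z where z: "z \<in> U0" "(a,z) \<in> e (Suc n)" using near[OF ab(2)] by blast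
      obtain w where w: "w \<in> U0" "(b,w) \<in> e (Suc n)" using near[OF ab(3)] by blast
      have "(z,w) \<in> mesh UU" using z(1) w(1) U0UU unfolding mesh_def by blast
      then have "(z,w) \<in> \<delta>0" using mUU by blast
      then have "(a,w) \<in> e (Suc n) O \<delta>0" using z(2) by (rule relcompI[rotated])
      then have aw: "(a,w) \<in> \<eta>1" using h1(2) by (rule subsetD[rotated])
      have "(w,b) \<in> e (Suc n)" using w(2) esym[of "Suc n"] by (rule symD[rotated])
      with aw have "(a,b) \<in> \<eta>1 O e (Suc n)" by (rule relcompI)
      then show "p \<in> \<eta>" using h(2) ab(1) by blast
    qed
  qed
  have "\<forall>x\<in>X. \<chi> x \<le> n" using Lcard unfolding \<chi>_def by fastforce
  with chains h(1) show ?thesis by (intro bexI[of _ \<eta>] exI[of _ \<chi>]) auto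
qed

lemma compact_col:
  fixes X :: "'a set" and n :: nat
  assumes hyp: "\<forall>F. F \<subseteq> X \<and> finite F \<longrightarrow> (\<exists>\<chi>::'a\<Rightarrow>nat. (\<forall>x\<in>F. \<chi> x \<le> n) \<and>
                   (\<forall>C. C \<subseteq> F \<and> Q C \<and> monochrome \<chi> C \<longrightarrow> R C))"
  shows "\<exists>\<chi>::'a\<Rightarrow>nat. (\<forall>x\<in>X. \<chi> x \<le> n) \<and> (\<forall>C. C \<subseteq> X \<and> finite C \<and> Q C \<and> monochrome \<chi> C \<longrightarrow> R C)"
proof -
  define valid where "valid F \<chi> \<longleftrightarrow> (\<forall>x\<in>F. \<chi> x \<le> n) \<and> (\<forall>C. C \<subseteq> F \<and> Q C \<and> monochrome \<chi> C \<longrightarrow> R C)"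
    for F and \<chi> :: "'a \<Rightarrow> nat"
  have vsub: "valid F \<chi> \<Longrightarrow> G \<subseteq> F \<Longrightarrow> valid G \<chi>" for F G \<chi> by (auto simp: valid_def)
  define A where "A = {p. p \<subseteq> X \<times> {..n} \<and> (\<forall>F. F \<subseteq> X \<and> finite F \<longrightarrow>
          (\<exists>\<chi>. valid F \<chi> \<and> (\<forall>x c. (x,c) \<in> p \<and> x \<in> F \<longrightarrow> \<chi> x = c)))}"
  have "{} \<in> A" using hyp unfolding A_def valid_def by simp
  have "\<exists>M\<in>A. \<forall>Y\<in>A. M \<subseteq> Y \<longrightarrow> Y = M"
  proof (rule subset_Zorn_nonempty)
    show "A \<noteq> {}" using \<open>{} \<in> A\<close> by blast
  next
    fix Ch assume ne: "Ch \<noteq> {}" and ch: "subset.chain A Ch"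
    have ChA: "Ch \<subseteq> A" using ch unfolding subset.chain_def by blast
    have sub: "\<Union>Ch \<subseteq> X \<times> {..n}" using ChA unfolding A_def by blast
    have "\<forall>F. F \<subseteq> X \<and> finite F \<longrightarrow> (\<exists>\<chi>. valid F \<chi> \<and> (\<forall>x c. (x,c) \<in> \<Union>Ch \<and> x \<in> F \<longrightarrow> \<chi> x = c))"
    proof (intro allI impI)
      fix F assume F: "F \<subseteq> X \<and> finite F"
      let ?P = "\<Union>Ch \<inter> (F \<times> {..n})"
      have "finite ?P" using F by blast
      then obtain B where B: "B \<in> Ch" "?P \<subseteq> B"
        using finite_subset_Union_chain[OF _ _ ne ch, of ?P] by blast
      then have "B \<in> A" using ChA by blast
      then obtain \<chi> where \<chi>: "valid F \<chi>" "\<forall>x c. (x,c) \<in> B \<and> x \<in> F \<longrightarrow> \<chi> x = c"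
        using F unfolding A_def by blast
      have "\<forall>x c. (x,c) \<in> \<Union>Ch \<and> x \<in> F \<longrightarrow> \<chi> x = c"
      proof (intro allI impI)
        fix x c assume xc: "(x,c) \<in> \<Union>Ch \<and> x \<in> F"
        then have "(x,c) \<in> ?P" using sub by blast
        then show "\<chi> x = c" using B \<chi>(2) xc by blast
      qed
      then show "\<exists>\<chi>. valid F \<chi> \<and> (\<forall>x c. (x,c) \<in> \<Union>Ch \<and> x \<in> F \<longrightarrow> \<chi> x = c)" using \<chi>(1) by blast
    qed
    then show "\<Union>Ch \<in> A" using sub unfolding A_def by blast
  qed
  then obtain M where MA: "M \<in> A" and Mmax: "\<forall>Y\<in>A. M \<subseteq> Y \<longrightarrow> Y = M" by blast
  have Msub: "M \<subseteq> X \<times> {..n}" using MA unfolding A_def by blast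
  have Mext: "\<And>F. F \<subseteq> X \<Longrightarrow> finite F \<Longrightarrow> \<exists>\<chi>. valid F \<chi> \<and> (\<forall>x c. (x,c) \<in> M \<and> x \<in> F \<longrightarrow> \<chi> x = c)"
    using MA unfolding A_def by blast
  have tot: "\<forall>x\<in>X. \<exists>c. (x,c) \<in> M"
  proof (rule ballI, rule ccontr)
    fix x assume xX: "x \<in> X" and nx: "\<not> (\<exists>c. (x,c) \<in> M)"
    have "\<forall>c\<in>{..n}. \<exists>G. G \<subseteq> X \<and> finite G \<and>
            \<not> (\<exists>\<chi>. valid G \<chi> \<and> (\<forall>y d. (y,d) \<in> insert (x,c) M \<and> y \<in> G \<longrightarrow> \<chi> y = d))"
    proof
      fix c assume c: "c \<in> {..n}"
      have "insert (x,c) M \<notin> A"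
      proof
        assume "insert (x,c) M \<in> A"
        then have "insert (x,c) M = M" using Mmax by blast
        then show False using nx by blast
      qed
      moreover have "insert (x,c) M \<subseteq> X \<times> {..n}" using Msub xX c by blast
      ultimately show "\<exists>G. G \<subseteq> X \<and> finite G \<and>
            \<not> (\<exists>\<chi>. valid G \<chi> \<and> (\<forall>y d. (y,d) \<in> insert (x,c) M \<and> y \<in> G \<longrightarrow> \<chi> y = d))"
        unfolding A_def by blast
    qed
    from bchoice[OF this] obtain G where G: "\<forall>c\<in>{..n}. G c \<subseteq> X \<and> finite (G c) \<and>
            \<not> (\<exists>\<chi>. valid (G c) \<chi> \<and> (\<forall>y d. (y,d) \<in> insert (x,c) M \<and> y \<in> G c \<longrightarrow> \<chi> y = d))"
      by blast
    let ?F = "insert x (\<Union>c\<in>{..n}. G c)"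
    have "?F \<subseteq> X" using G xX by blast
    moreover have "finite ?F" using G by auto
    ultimately obtain \<chi> where \<chi>: "valid ?F \<chi>" "\<forall>y d. (y,d) \<in> M \<and> y \<in> ?F \<longrightarrow> \<chi> y = d"
      using Mext by blast
    define c where "c = \<chi> x"
    have cn: "c \<in> {..n}" using \<chi>(1) unfolding valid_def c_def by simp
    have "G c \<subseteq> ?F" using cn by blast
    then have "valid (G c) \<chi>" using vsub \<chi>(1) by blast
    moreover have "\<forall>y d. (y,d) \<in> insert (x,c) M \<and> y \<in> G c \<longrightarrow> \<chi> y = d"
      using \<chi>(2) \<open>G c \<subseteq> ?F\<close> c_def by blast
    ultimately have "\<exists>\<chi>. valid (G c) \<chi> \<and> (\<forall>y d. (y,d) \<in> insert (x,c) M \<and> y \<in> G c \<longrightarrow> \<chi> y = d)"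
      by blast
    moreover have "\<not> (\<exists>\<chi>. valid (G c) \<chi> \<and> (\<forall>y d. (y,d) \<in> insert (x,c) M \<and> y \<in> G c \<longrightarrow> \<chi> y = d))"
      using bspec[OF G cn] by (rule conjunct2[OF conjunct2])
    ultimately show False by (rule notE[rotated])
  qed
  define \<chi>0 where "\<chi>0 x = (SOME c. (x,c) \<in> M)" for x
  have \<chi>0M: "x \<in> X \<Longrightarrow> (x, \<chi>0 x) \<in> M" for x using tot unfolding \<chi>0_def by (meson someI_ex)
  have "\<forall>x\<in>X. \<chi>0 x \<le> n"
  proof
    fix x assume "x \<in> X"
    then have "(x, \<chi>0 x) \<in> M" by (rule \<chi>0M)
    then show "\<chi>0 x \<le> n" using Msub by blast
  qed
  moreover have "\<forall>C. C \<subseteq> X \<and> finite C \<and> Q C \<and> monochrome \<chi>0 C \<longrightarrow> R C"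
  proof (intro allI impI)
    fix C assume C: "C \<subseteq> X \<and> finite C \<and> Q C \<and> monochrome \<chi>0 C"
    then have "C \<subseteq> X" "finite C" by simp_all
    from Mext[OF this] obtain \<chi> where \<chi>: "valid C \<chi>" "\<forall>y d. (y,d) \<in> M \<and> y \<in> C \<longrightarrow> \<chi> y = d"
      by blast
    have "\<forall>y\<in>C. \<chi> y = \<chi>0 y"
    proof
      fix y assume y: "y \<in> C"
      then have "y \<in> X" using \<open>C \<subseteq> X\<close> by (rule subsetD[rotated])
      then have "(y, \<chi>0 y) \<in> M" by (rule \<chi>0M)
      then show "\<chi> y = \<chi>0 y" using \<chi>(2)[rule_format, of y "\<chi>0 y"] y by simp
    qed
    then have "monochrome \<chi> C" using C unfolding monochrome_def by metis
    moreover have "\<forall>C'. C' \<subseteq> C \<and> Q C' \<and> monochrome \<chi> C' \<longrightarrow> R C'" using \<chi>(1) unfolding valid_def by (rule conjunct2)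
    ultimately show "R C" using C by blast
  qed
  ultimately show ?thesis by (intro exI[of _ \<chi>0]) simp
qed

lemma backward:
  assumes cs: "coarse_space X E"
    and hyp: "\<forall>\<epsilon>\<in>E. \<exists>\<delta>\<in>E. \<forall>F. F \<subseteq> X \<and> finite F \<longrightarrow>
       (\<exists>\<chi>::'a \<Rightarrow> nat. (\<forall>x\<in>F. \<chi> x \<le> n) \<and>
          (\<forall>C. C \<subseteq> F \<and> eps_chain \<epsilon> C \<and> monochrome \<chi> C \<longrightarrow> C \<times> C \<subseteq> \<delta>))"
  shows "asdim_prop X E n"
  unfolding asdim_prop_def
proof
  fix \<epsilon> assume epsE: "\<epsilon> \<in> E"
  have ent: "\<And>e. e \<in> E \<Longrightarrow> Id_on X \<subseteq> e \<and> e \<subseteq> X \<times> X \<and> sym e"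
    using conjunct1[OF cs[unfolded coarse_space_def]] by (rule bspec)
  have comp: "\<And>e d. e \<in> E \<Longrightarrow> d \<in> E \<Longrightarrow> \<exists>\<eta>\<in>E. e O d \<subseteq> \<eta>"
    using conjunct1[OF conjunct2[OF cs[unfolded coarse_space_def]]] by blast
  obtain \<epsilon>' where e'E: "\<epsilon>' \<in> E" and ee': "\<epsilon> O \<epsilon> \<subseteq> \<epsilon>'" using comp[OF epsE epsE] by blast
  obtain \<delta> where dE: "\<delta> \<in> E" and col: "\<forall>F. F \<subseteq> X \<and> finite F \<longrightarrow>
       (\<exists>\<chi>::'a \<Rightarrow> nat. (\<forall>x\<in>F. \<chi> x \<le> n) \<and>
          (\<forall>C. C \<subseteq> F \<and> eps_chain \<epsilon>' C \<and> monochrome \<chi> C \<longrightarrow> C \<times> C \<subseteq> \<delta>))"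
    using bspec[OF hyp e'E] by (rule bexE)
  obtain \<chi>0 :: "'a \<Rightarrow> nat" where c0: "\<forall>x\<in>X. \<chi>0 x \<le> n"
    and c1: "\<forall>C. C \<subseteq> X \<and> finite C \<and> eps_chain \<epsilon>' C \<and> monochrome \<chi>0 C \<longrightarrow> C \<times> C \<subseteq> \<delta>"
    using compact_col[OF col] by blast
  have e'ent: "\<epsilon>' \<subseteq> X \<times> X \<and> sym \<epsilon>'" using ent[OF e'E] by blast
  have eent: "\<epsilon> \<subseteq> X \<times> X \<and> sym \<epsilon>" using ent[OF epsE] by blast
  define S where "S = {(a,b). (a,b) \<in> \<epsilon>' \<and> \<chi>0 a = \<chi>0 b}"
  have symS: "sym S" using e'ent unfolding S_def sym_def by auto
  have SX: "S \<subseteq> X \<times> X" using e'ent unfolding S_def by auto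
  have symSt: "sym (S\<^sup>*)" by (rule sym_rtrancl[OF symS])
  have rt_col: "(a,b) \<in> S\<^sup>* \<Longrightarrow> \<chi>0 a = \<chi>0 b" for a b
    by (induction rule: rtrancl_induct) (auto simp: S_def)
  have rt_X: "(a,b) \<in> S\<^sup>* \<Longrightarrow> a \<in> X \<Longrightarrow> b \<in> X" for a b
    by (induction rule: rtrancl_induct) (use SX in auto)
  have rt_d: "(a,b) \<in> \<delta>" if ab: "(a,b) \<in> S\<^sup>*" and aX: "a \<in> X" for a b
  proof -
    obtain k where "(a,b) \<in> S ^^ k" using ab rtrancl_power by blast
    then obtain f where f: "f 0 = a" "f k = b" "\<forall>i<k. (f i, f (Suc i)) \<in> S"
      using relpow_fun_conv by metis
    have fX: "i \<le> k \<Longrightarrow> f i \<in> X" for i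
    proof (induction i)
      case 0 then show ?case using f aX by simp
    next
      case (Suc i)
      then have "(f i, f (Suc i)) \<in> S" using f(3) by simp
      then show ?case using SX by blast
    qed
    have fc: "i \<le> k \<Longrightarrow> \<chi>0 (f i) = \<chi>0 a" for i
    proof (induction i)
      case 0 then show ?case using f by simp
    next
      case (Suc i)
      then have "(f i, f (Suc i)) \<in> S" using f(3) by simp
      then show ?case using Suc unfolding S_def by simp
    qed
    let ?C = "f ` {0..k}"
    have "?C \<subseteq> X" using fX by auto
    moreover have "finite ?C" by simp
    moreover have "eps_chain \<epsilon>' ?C" unfolding eps_chain_def using f(3) unfolding S_def by blast
    moreover have "monochrome \<chi>0 ?C" unfolding monochrome_def using fc by auto
    ultimately have "?C \<times> ?C \<subseteq> \<delta>" using c1 by blast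
    moreover have "f 0 \<in> ?C" "f k \<in> ?C" by simp_all
    then have "a \<in> ?C" "b \<in> ?C" using f(1,2) by simp_all
    ultimately show ?thesis by blast
  qed
  define UU where "UU = (\<lambda>x. S\<^sup>* `` {x}) ` X"
  have cover: "\<Union>UU = X" unfolding UU_def using rt_X by auto
  have mesh: "mesh UU \<subseteq> \<delta>"
  proof
    fix p assume "p \<in> mesh UU"
    then obtain a y z where p: "p = (y,z)" "a \<in> X" "(a,y) \<in> S\<^sup>*" "(a,z) \<in> S\<^sup>*"
      unfolding mesh_def UU_def by blast
    have "(y,a) \<in> S\<^sup>*" using p symSt by (meson symD)
    then have "(y,z) \<in> S\<^sup>*" using p by simp
    moreover have "y \<in> X" using rt_X p by blast
    ultimately show "p \<in> \<delta>" using rt_d p by blast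
  qed
  have count: "finite {U\<in>UU. ball x \<epsilon> \<inter> U \<noteq> {}} \<and> card {U\<in>UU. ball x \<epsilon> \<inter> U \<noteq> {}} \<le> n + 1"
    if xX: "x \<in> X" for x
  proof -
    let ?W = "{U\<in>UU. ball x \<epsilon> \<inter> U \<noteq> {}}"
    define g where "g U = \<chi>0 (SOME y. y \<in> ball x \<epsilon> \<inter> U)" for U
    have gy: "U \<in> ?W \<Longrightarrow> (SOME y. y \<in> ball x \<epsilon> \<inter> U) \<in> ball x \<epsilon> \<inter> U" for U
      by (rule someI_ex) blast
    have inj: "inj_on g ?W"
    proof (rule inj_onI)
      fix U1 U2 assume U1: "U1 \<in> ?W" and U2: "U2 \<in> ?W" and gg: "g U1 = g U2"
      define y1 where "y1 = (SOME y. y \<in> ball x \<epsilon> \<inter> U1)"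
      define y2 where "y2 = (SOME y. y \<in> ball x \<epsilon> \<inter> U2)"
      have y1: "y1 \<in> ball x \<epsilon> \<inter> U1" using gy[OF U1] y1_def by simp
      have y2: "y2 \<in> ball x \<epsilon> \<inter> U2" using gy[OF U2] y2_def by simp
      obtain a1 where a1: "a1 \<in> X" "U1 = S\<^sup>* `` {a1}" using U1 unfolding UU_def by blast
      obtain a2 where a2: "a2 \<in> X" "U2 = S\<^sup>* `` {a2}" using U2 unfolding UU_def by blast
      have "(x,y1) \<in> \<epsilon>" "(x,y2) \<in> \<epsilon>" using y1 y2 unfolding ball_def by auto
      then have "(y1,x) \<in> \<epsilon>" using eent by (meson symD)
      then have "(y1,y2) \<in> \<epsilon>'" using \<open>(x,y2) \<in> \<epsilon>\<close> ee' by blast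
      moreover have "\<chi>0 y1 = \<chi>0 y2" using gg unfolding g_def y1_def y2_def by simp
      ultimately have "(y1,y2) \<in> S" unfolding S_def by simp
      moreover have "(a1,y1) \<in> S\<^sup>*" "(a2,y2) \<in> S\<^sup>*" using y1 y2 a1 a2 by auto
      moreover have "(y2,a2) \<in> S\<^sup>*" using \<open>(a2,y2) \<in> S\<^sup>*\<close> symSt by (meson symD)
      ultimately have a12: "(a1,a2) \<in> S\<^sup>*" by (meson rtrancl_trans r_into_rtrancl)
      have a21: "(a2,a1) \<in> S\<^sup>*" using a12 symSt by (meson symD)
      show "U1 = U2" unfolding a1(2) a2(2)
        using a12 a21 by (auto intro: rtrancl_trans)
    qed
    have img: "g ` ?W \<subseteq> {..n}"
    proof
      fix c assume "c \<in> g ` ?W"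
      then obtain U where U: "U \<in> ?W" "c = g U" by blast
      have "(SOME y. y \<in> ball x \<epsilon> \<inter> U) \<in> X" using gy[OF U(1)] eent unfolding ball_def by blast
      then show "c \<in> {..n}" using c0 U unfolding g_def by simp
    qed
    have fin: "finite ?W" using finite_imageD[OF finite_subset[OF img finite_atMost] inj] .
    have "card ?W \<le> card {..n}" using card_inj_on_le[OF inj img] by simp
    then show ?thesis using fin by simp
  qed
  show "\<exists>UU. \<Union>UU = X \<and> (\<exists>\<delta>\<in>E. mesh UU \<subseteq> \<delta>) \<and>
        (\<forall>x\<in>X. finite {U\<in>UU. ball x \<epsilon> \<inter> U \<noteq> {}} \<and> card {U\<in>UU. ball x \<epsilon> \<inter> U \<noteq> {}} \<le> n + 1)"
    using cover mesh dE count by blast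
qed

theorem proposition2p5:
  fixes X :: "'a set" and E :: "('a \<times> 'a) set set" and n :: nat
  assumes "coarse_space X E"
  shows "asdim X E \<le> enat n \<longleftrightarrow>
    (\<forall>\<epsilon>\<in>E. \<exists>\<delta>\<in>E. \<forall>F. F \<subseteq> X \<and> finite F \<longrightarrow>
       (\<exists>\<chi>::'a \<Rightarrow> nat. (\<forall>x\<in>F. \<chi> x \<le> n) \<and>
          (\<forall>C. C \<subseteq> F \<and> eps_chain \<epsilon> C \<and> monochrome \<chi> C \<longrightarrow> C \<times> C \<subseteq> \<delta>)))"
proof
  assume "asdim X E \<le> enat n"
  then have ad: "asdim_prop X E n" using asdim_le_iff by blast
  show "\<forall>\<epsilon>\<in>E. \<exists>\<delta>\<in>E. \<forall>F. F \<subseteq> X \<and> finite F \<longrightarrow>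
       (\<exists>\<chi>::'a \<Rightarrow> nat. (\<forall>x\<in>F. \<chi> x \<le> n) \<and>
          (\<forall>C. C \<subseteq> F \<and> eps_chain \<epsilon> C \<and> monochrome \<chi> C \<longrightarrow> C \<times> C \<subseteq> \<delta>))"
  proof
    fix \<epsilon> assume "\<epsilon> \<in> E"
    from forward[OF assms ad this] obtain \<delta> \<chi> where "\<delta> \<in> E" "\<forall>x\<in>X. \<chi> x \<le> n"
      "\<forall>C. C \<subseteq> X \<and> eps_chain \<epsilon> C \<and> monochrome \<chi> C \<longrightarrow> C \<times> C \<subseteq> \<delta>" by blast
    then show "\<exists>\<delta>\<in>E. \<forall>F. F \<subseteq> X \<and> finite F \<longrightarrow>
       (\<exists>\<chi>::'a \<Rightarrow> nat. (\<forall>x\<in>F. \<chi> x \<le> n) \<and>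
          (\<forall>C. C \<subseteq> F \<and> eps_chain \<epsilon> C \<and> monochrome \<chi> C \<longrightarrow> C \<times> C \<subseteq> \<delta>))"
      by (meson subset_trans subsetD)
  qed
next
  assume "\<forall>\<epsilon>\<in>E. \<exists>\<delta>\<in>E. \<forall>F. F \<subseteq> X \<and> finite F \<longrightarrow>
       (\<exists>\<chi>::'a \<Rightarrow> nat. (\<forall>x\<in>F. \<chi> x \<le> n) \<and>
          (\<forall>C. C \<subseteq> F \<and> eps_chain \<epsilon> C \<and> monochrome \<chi> C \<longrightarrow> C \<times> C \<subseteq> \<delta>))"
  then have "asdim_prop X E n" using backward[OF assms] by blast
  then show "asdim X E \<le> enat n" using asdim_le_iff by blast
qed

end
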